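(* Let $k:\mathbb R\to[0,\infty)$ be continuous with $\int_{\mathbb R}k(x)\,dx=1$, satisfying (K1) there is $\lambda>0$ with $\int_{\mathbb R}k(x)e^{\lambda|x|}dx<+\infty$, and (K2) $k(x_1)>0$, $k(x_2)>0$ for some $x_1>0$, $x_2<0$. Let $f\in C^1([0,1])$ satisfy $f(0)=f(1)=0$, $f(u)>0$ for $u\in(0,1)$, $f'(0)>0$ and $f(u)\leqslant f'(0)u$ for $u\in(0,1)$. Let $u_0\in C(\mathbb R)$ with $0\leqslant u_0\leqslant 1$, and let $u(t,x)$ be the solution of \[ u_t(t,x)=\int_{\mathbb R}k(x-y)u(t,y)\,dy-u(t,x)+f(u(t,x)),\ t>0,\ x\in\mathbb R,\qquad u(0,x)=u_0(x). \] If, for some $x_1\in\mathbb R$, both $k(\cdot)$ and $u_0(\cdot+x_1)$ are symmetric (even) and decreasing on $\mathbb R^+$, then for every $t>0$ the function $u(t,\cdot+x_1)$ is symmetric and decreasing on $\mathbb R^+$.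
   Context: "Decreasing on $\mathbb R^+$" for a function $g$ means $g(x)\geqslant g(y)$ whenever $0\leqslant x\leqslant y$. *)

theory Defs
  imports "HOL-Analysis.Analysis"
begin

definition sym_decr :: "(real \<Rightarrow> real) \<Rightarrow> bool" where
  "sym_decr g \<longleftrightarrow> (\<forall>x. g (- x) = g x) \<and> (\<forall>x y. 0 \<le> x \<and> x \<le> y \<longrightarrow> g y \<le> g x)"

definition is_solution ::
  "(real \<Rightarrow> real) \<Rightarrow> (real \<Rightarrow> real) \<Rightarrow> (real \<Rightarrow> real) \<Rightarrow> (real \<Rightarrow> real \<Rightarrow> real) \<Rightarrow> bool" where
  "is_solution k f u0 u \<longleftrightarrow>
     continuous_on ({0..} \<times> UNIV) (\<lambda>(t, x). u t x) \<and>
     (\<forall>t\<ge>0. \<forall>x. 0 \<le> u t x \<and> u t x \<le> 1) \<and>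
     (\<forall>x. u 0 x = u0 x) \<and>
     (\<forall>t>0. \<forall>x. (\<lambda>y. k (x - y) * u t y) integrable_on UNIV \<and>
        ((\<lambda>s. u s x) has_real_derivative
           (integral UNIV (\<lambda>y. k (x - y) * u t y) - u t x + f (u t x))) (at t))"

end

theory Submission imports Defs begin

lemma refl_ivl:
  fixes g :: "real \<Rightarrow> real"
  assumes "(g has_integral i) {c-b..c-a}"
  shows "((\<lambda>x. g (c - x)) has_integral i) {a..b}"
proof -
  have "((\<lambda>x. g (- x)) has_integral i) {-(c-a)..-(c-b)}"
    using assms has_integral_reflect_real by blast
  hence "((\<lambda>x. g (- x)) has_integral i) {a + (-c)..b + (-c)}" by simp
  hence "(((\<lambda>x. g (- x)) \<circ> (+) (-c)) has_integral i) {a..b}"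
    using has_integral_shift_Icc_real by blast
  thus ?thesis by (simp add: o_def)
qed

lemma refl_UNIV:
  fixes g :: "real \<Rightarrow> real"
  assumes g: "(g has_integral i) UNIV"
  shows "((\<lambda>x. g (c - x)) has_integral i) UNIV"
proof -
  from g have gi: "\<And>a b. g integrable_on cbox a b"
    and ge: "\<And>e. e>0 \<Longrightarrow> \<exists>B>0. \<forall>a b. ball 0 B \<subseteq> cbox a b \<longrightarrow> norm (integral (cbox a b) g - i) < e"
    unfolding has_integral_alt'[of g] by auto
  have ivl: "((\<lambda>x. g (c - x)) has_integral integral {c-b..c-a} g) {a..b}" for a b
    by (rule refl_ivl) (metis gi box_real(2) integrable_integral)
  show ?thesis
    unfolding has_integral_alt'
  proof (intro conjI allI impI)
    fix a b :: real
    show "(\<lambda>x. if x \<in> UNIV then g (c - x) else 0) integrable_on cbox a b"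
      using ivl[where a=a and b=b] by (auto simp: integrable_on_def)
  next
    fix e :: real assume "e > 0"
    then obtain B where B: "B > 0" "\<And>a b. ball 0 B \<subseteq> cbox a b \<Longrightarrow> norm (integral (cbox a b) g - i) < e"
      using ge by blast
    show "\<exists>B>0. \<forall>a b. ball 0 B \<subseteq> cbox a b \<longrightarrow>
            norm (integral (cbox a b) (\<lambda>x. if x \<in> UNIV then g (c - x) else 0) - i) < e"
    proof (intro exI[of _ "B + \<bar>c\<bar>"] conjI allI impI)
      show "B + \<bar>c\<bar> > 0" using B by simp
      fix a b :: real assume sub: "ball 0 (B + \<bar>c\<bar>) \<subseteq> cbox a b"
      have "ball 0 B \<subseteq> cbox (c-b) (c-a)"
      proof
        fix y :: real assume "y \<in> ball 0 B"
        hence "c - y \<in> ball 0 (B + \<bar>c\<bar>)" by (auto simp: dist_real_def)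
        hence "c - y \<in> cbox a b" using sub by blast
        thus "y \<in> cbox (c-b) (c-a)" by auto
      qed
      hence "norm (integral (cbox (c-b) (c-a)) g - i) < e" using B by blast
      moreover have "integral (cbox a b) (\<lambda>x. if x \<in> UNIV then g (c - x) else 0) = integral {c-b..c-a} g"
        using ivl[where a=a and b=b] by (simp add: integral_unique)
      ultimately show "norm (integral (cbox a b) (\<lambda>x. if x \<in> UNIV then g (c - x) else 0) - i) < e"
        by simp
    qed
  qed
qed


lemma conv_bound:
  fixes k u :: "real \<Rightarrow> real" and R :: "real set"
  assumes int1: "(\<lambda>y. k (x - y) * u y) integrable_on UNIV"
    and int2: "(\<lambda>y. k ((2*m - x) - y) * u y) integrable_on UNIV"
    and kint: "(k has_integral 1) UNIV"
    and k_even: "\<And>v. k (- v) = k v"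
    and k_mono: "\<And>p q. \<bar>p\<bar> \<le> \<bar>q\<bar> \<Longrightarrow> k q \<le> k p"
    and k_nonneg: "\<And>v. k v \<ge> 0"
    and R1: "\<And>x y. x \<in> R \<Longrightarrow> y \<in> R \<Longrightarrow> \<bar>x - y\<bar> \<le> \<bar>x + y - 2*m\<bar>"
    and R2: "\<And>y. y \<in> R \<or> 2*m - y \<in> R"
    and xR: "x \<in> R" and e: "e > 0" and N: "N \<ge> 0"
    and hyp: "\<And>y. y \<in> R \<Longrightarrow> - N \<le> e * (u (2*m - y) - u y)"
  shows "- N \<le> e * (integral UNIV (\<lambda>y. k ((2*m - x) - y) * u y) - integral UNIV (\<lambda>y. k (x - y) * u y))"
proof -
  define I1 where "I1 = integral UNIV (\<lambda>y. k (x - y) * u y)"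
  define I2 where "I2 = integral UNIV (\<lambda>y. k ((2*m - x) - y) * u y)"
  define g where "g y = k (x - y) * u y - k ((2*m - x) - y) * u y" for y
  have hg: "(g has_integral (I1 - I2)) UNIV"
    unfolding g_def I1_def I2_def
    by (intro has_integral_diff integrable_integral int1 int2)
  have hg': "((\<lambda>y. g (2*m - y)) has_integral (I1 - I2)) UNIV"
    by (rule refl_UNIV[OF hg])
  define h where "h y = k (x - y) * (u (2*m - y) - u y) - k ((2*m - x) - y) * (u (2*m - y) - u y)" for y
  have heq: "h y = - g (2*m - y) - g y" for y
  proof -
    have a: "k (x - (2*m - y)) = k ((2*m - x) - y)" using k_even[of "(2*m - x) - y"] by (simp add: algebra_simps)
    have b: "k ((2*m - x) - (2*m - y)) = k (x - y)" using k_even[of "x - y"] by (simp add: algebra_simps)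
    show ?thesis unfolding h_def g_def a b by (simp add: algebra_simps)
  qed
  have hh: "(h has_integral (- (I1 - I2) - (I1 - I2))) UNIV"
    unfolding heq by (intro has_integral_diff has_integral_neg hg hg')
  have heh: "((\<lambda>y. e * h y) has_integral (e * (- (I1 - I2) - (I1 - I2)))) UNIV"
    by (rule has_integral_mult_right[OF hh])
  have k1: "((\<lambda>y. k (x - y)) has_integral 1) UNIV" by (rule refl_UNIV[OF kint])
  have k2: "((\<lambda>y. k ((2*m - x) - y)) has_integral 1) UNIV" by (rule refl_UNIV[OF kint])
  have hk: "((\<lambda>y. - N * (k (x - y) + k ((2*m - x) - y))) has_integral (- N * (1 + 1))) UNIV"
    by (intro has_integral_mult_right has_integral_add k1 k2)
  have pw: "- N * (k (x - y) + k ((2*m - x) - y)) \<le> e * h y" for y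
  proof -
    have kx: "k (x - y) \<ge> 0" "k ((2*m - x) - y) \<ge> 0" using k_nonneg by auto
    have "y \<in> R \<or> 2*m - y \<in> R" using R2 by blast
    thus ?thesis
    proof
      assume yR: "y \<in> R"
      have "\<bar>x - y\<bar> \<le> \<bar>(2*m - x) - y\<bar>" using R1[OF xR yR] by (simp add: abs_minus_commute algebra_simps)
      hence D: "k ((2*m - x) - y) \<le> k (x - y)" by (rule k_mono)
      have "(k (x - y) - k ((2*m - x) - y)) * (- N) \<le> (k (x - y) - k ((2*m - x) - y)) * (e * (u (2*m - y) - u y))"
        using hyp[OF yR] D by (intro mult_left_mono) auto
      moreover have "- N * (k (x - y) + k ((2*m - x) - y)) \<le> (k (x - y) - k ((2*m - x) - y)) * (- N)"
        using N kx by (simp add: algebra_simps mult_left_mono)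
      ultimately show ?thesis unfolding h_def by (simp add: algebra_simps)
    next
      assume yR: "2*m - y \<in> R"
      have "\<bar>x - (2*m - y)\<bar> \<le> \<bar>x - y\<bar>" using R1[OF xR yR] by (simp add: algebra_simps)
      hence "\<bar>(2*m - x) - y\<bar> \<le> \<bar>x - y\<bar>" by (simp add: abs_minus_commute algebra_simps)
      hence D: "k (x - y) \<le> k ((2*m - x) - y)" by (rule k_mono)
      have "(k ((2*m - x) - y) - k (x - y)) * (- N) \<le> (k ((2*m - x) - y) - k (x - y)) * (e * (u (2*m - (2*m - y)) - u (2*m - y)))"
        using hyp[OF yR] D by (intro mult_left_mono) auto
      moreover have "- N * (k (x - y) + k ((2*m - x) - y)) \<le> (k ((2*m - x) - y) - k (x - y)) * (- N)"
        using N kx by (simp add: algebra_simps mult_left_mono)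
      ultimately show ?thesis unfolding h_def by (simp add: algebra_simps)
    qed
  qed
  have "- N * (1 + 1) \<le> e * (- (I1 - I2) - (I1 - I2))"
    by (rule has_integral_le[OF hk heh]) (use pw in auto)
  thus ?thesis unfolding I1_def[symmetric] I2_def[symmetric] by (simp add: algebra_simps)
qed


lemma cont_slice:
  assumes "continuous_on ({0..} \<times> UNIV) (\<lambda>(t, x). u t x)" "S \<subseteq> {0..}"
  shows "continuous_on S (\<lambda>r. u r c)"
proof -
  have c1: "continuous_on S (\<lambda>r. (r, c))" by (intro continuous_intros)
  have c2: "(\<lambda>r. (r, c)) ` S \<subseteq> {0..} \<times> UNIV" using assms(2) by auto
  show ?thesis using continuous_on_compose2[OF assms(1) c1 c2] by simp
qed

lemma core:
  fixes k f :: "real \<Rightarrow> real" and u :: "real \<Rightarrow> real \<Rightarrow> real" and R :: "real set" and m L :: real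
  assumes cont: "continuous_on ({0..} \<times> UNIV) (\<lambda>(t, x). u t x)"
    and rng: "\<forall>t\<ge>0. \<forall>x. 0 \<le> u t x \<and> u t x \<le> 1"
    and der: "\<forall>t>0. \<forall>x. (\<lambda>y. k (x - y) * u t y) integrable_on UNIV \<and>
        ((\<lambda>s. u s x) has_real_derivative
           (integral UNIV (\<lambda>y. k (x - y) * u t y) - u t x + f (u t x))) (at t)"
    and kint: "(k has_integral 1) UNIV"
    and k_even: "\<And>v. k (- v) = k v"
    and k_mono: "\<And>p q. \<bar>p\<bar> \<le> \<bar>q\<bar> \<Longrightarrow> k q \<le> k p"
    and k_nonneg: "\<And>v. k v \<ge> 0"
    and lip: "\<And>a b. a \<in> {0..1} \<Longrightarrow> b \<in> {0..1} \<Longrightarrow> \<bar>f a - f b\<bar> \<le> L * \<bar>a - b\<bar>"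
    and L: "L \<ge> 0"
    and R1: "\<And>x y. x \<in> R \<Longrightarrow> y \<in> R \<Longrightarrow> \<bar>x - y\<bar> \<le> \<bar>x + y - 2*m\<bar>"
    and R2: "\<And>y. y \<in> R \<or> 2*m - y \<in> R"
    and init: "\<And>x. x \<in> R \<Longrightarrow> u 0 x \<le> u 0 (2*m - x)"
  shows "\<forall>t\<ge>0. \<forall>x\<in>R. u t x \<le> u t (2*m - x)"
proof -
  define a where "a = 1 + L"
  define \<delta> where "\<delta> = 1 / (2 * (1 + 2 * L))"
  have \<delta>pos: "\<delta> > 0" using L by (simp add: \<delta>_def)
  have \<delta>eq: "\<delta> * (1 + 2 * L) = 1/2" using L by (simp add: \<delta>_def)
  define w where "w t x = u t (2*m - x) - u t x" for t x
  define z where "z t x = exp (a * t) * w t x" for t x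
  define I where "I t x = integral UNIV (\<lambda>y. k (x - y) * u t y)" for t x
  have step: "\<forall>t\<in>{t0..t0+\<delta>}. \<forall>x\<in>R. w t x \<ge> 0"
    if t0: "t0 \<ge> 0" and h0: "\<forall>x\<in>R. w t0 x \<ge> 0" for t0
  proof -
    define T where "T = t0 + \<delta>"
    define S where "S = {- z s x | s x. s \<in> {t0..T} \<and> x \<in> R} \<union> {0}"
    have bdd: "v \<le> exp (a * T)" if "v \<in> S" for v
    proof -
      { fix s x assume s: "s \<in> {t0..T}"
        have "\<bar>w s x\<bar> \<le> 1" using rng s t0 unfolding w_def
          by (smt (verit) atLeastAtMost_iff)
        hence "- z s x \<le> exp (a * s)" unfolding z_def
          by (smt (verit, best) exp_gt_zero mult_left_le mult_minus_right abs_le_iff)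
        also have "\<dots> \<le> exp (a * T)" using s L by (simp add: a_def mult_left_mono)
        finally have "- z s x \<le> exp (a * T)" . }
      thus ?thesis using that unfolding S_def by auto
    qed
    have bddS: "bdd_above S" using bdd by (auto simp: bdd_above_def)
    define N where "N = Sup S"
    have S0: "0 \<in> S" unfolding S_def by auto
    have Nup: "v \<le> N" if "v \<in> S" for v unfolding N_def by (rule cSup_upper[OF that bddS])
    have N0: "N \<ge> 0" using Nup[OF S0] .
    have zN: "- z s x \<le> N" if "s \<in> {t0..T}" "x \<in> R" for s x
      using Nup that unfolding S_def by blast
    have half: "- z s x \<le> N / 2" if s: "s \<in> {t0..T}" and xR: "x \<in> R" for s x
    proof (cases "s = t0")
      case True
      have "z s x \<ge> 0" using h0 xR True unfolding z_def by simp
      then show ?thesis using N0 by simp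
    next
      case False
      hence lt: "t0 < s" using s by simp
      define \<phi> where "\<phi> r = exp (a * r) * (u r (2*m - x) - u r x)" for r
      define d where "d r = a * exp (a * r) * (u r (2*m - x) - u r x) + exp (a * r) *
          ((I r (2*m - x) - u r (2*m - x) + f (u r (2*m - x))) - (I r x - u r x + f (u r x)))" for r
      have dphi: "(\<phi> has_real_derivative d r) (at r)" if "r > 0" for r
      proof -
        have d1: "((\<lambda>s. u s (2*m - x)) has_real_derivative (I r (2*m - x) - u r (2*m - x) + f (u r (2*m - x)))) (at r)"
          using der that unfolding I_def by blast
        have d2: "((\<lambda>s. u s x) has_real_derivative (I r x - u r x + f (u r x))) (at r)"
          using der that unfolding I_def by blast
        show ?thesis unfolding \<phi>_def d_def
          by (rule derivative_eq_intros d1 d2 refl | simp add: algebra_simps)+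
      qed
      have cphi: "continuous_on {t0..s} \<phi>" unfolding \<phi>_def
        using t0 by (intro continuous_intros cont_slice[OF cont]) auto
      obtain l \<xi> where \<xi>: "t0 < \<xi>" "\<xi> < s" and dl: "(\<phi> has_real_derivative l) (at \<xi>)"
        and mv: "\<phi> s - \<phi> t0 = (s - t0) * l"
        using MVT[OF lt cphi] dphi t0 real_differentiable_def
        by (smt (verit, ccfv_threshold))
      have \<xi>pos: "\<xi> > 0" using \<xi> t0 by simp
      have ld: "l = d \<xi>" using DERIV_unique[OF dl dphi[OF \<xi>pos]] .
      define E where "E = exp (a * \<xi>)"
      have Epos: "E > 0" unfolding E_def by simp
      have \<xi>T: "\<xi> \<in> {t0..T}" using \<xi> s by auto
      have conv: "- N \<le> E * (I \<xi> (2*m - x) - I \<xi> x)"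
        unfolding I_def
      proof (rule conv_bound[OF _ _ kint k_even k_mono k_nonneg R1 R2 xR Epos N0])
        show "(\<lambda>y. k (x - y) * u \<xi> y) integrable_on UNIV" using der \<xi>pos by blast
        show "(\<lambda>y. k (2 * m - x - y) * u \<xi> y) integrable_on UNIV" using der \<xi>pos by blast
        fix y assume yR: "y \<in> R"
        show "- N \<le> E * (u \<xi> (2 * m - y) - u \<xi> y)"
          using zN[OF \<xi>T yR] unfolding z_def w_def E_def by linarith
      qed
      define P where "P = u \<xi> (2*m - x)"
      define Q where "Q = u \<xi> x"
      have PQ: "P \<in> {0..1}" "Q \<in> {0..1}" using rng \<xi>pos unfolding P_def Q_def by auto
      have fl: "\<bar>f P - f Q\<bar> \<le> L * \<bar>P - Q\<bar>" using lip[OF PQ] .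
      have react: "- (2 * L) * N \<le> E * (L * (P - Q) + f P - f Q)"
      proof (cases "P - Q \<ge> 0")
        case True
        hence "L * (P - Q) + f P - f Q \<ge> 0" using fl by (simp add: abs_le_iff)
        hence "E * (L * (P - Q) + f P - f Q) \<ge> 0" using Epos by simp
        moreover have "- (2 * L) * N \<le> 0" using L N0 by simp
        ultimately show ?thesis by linarith
      next
        case False
        hence "\<bar>P - Q\<bar> = Q - P" by simp
        hence "f Q - f P \<le> L * (Q - P)" using fl by (simp add: abs_le_iff)
        moreover have "L * (Q - P) = - (L * (P - Q))" by (simp add: algebra_simps)
        ultimately have "L * (P - Q) + f P - f Q \<ge> 2 * L * (P - Q)" by linarith
        hence "E * (L * (P - Q) + f P - f Q) \<ge> E * (2 * L * (P - Q))"
          using Epos by (simp add: mult_left_mono)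
        moreover have "E * (P - Q) \<ge> - N" using zN[OF \<xi>T xR] unfolding z_def w_def E_def P_def Q_def by simp
        hence "2 * L * (E * (P - Q)) \<ge> 2 * L * (- N)" using L by (intro mult_left_mono) auto
        ultimately show ?thesis by (simp add: algebra_simps)
      qed
      have "d \<xi> = E * (I \<xi> (2*m - x) - I \<xi> x) + E * (L * (P - Q) + f P - f Q)"
        unfolding d_def E_def P_def Q_def a_def by (simp add: algebra_simps)
      hence dlow: "l \<ge> - (1 + 2 * L) * N" using conv react ld by (simp add: algebra_simps)
      have "\<phi> t0 \<ge> 0" using h0 xR unfolding \<phi>_def w_def by simp
      moreover have "(s - t0) * l \<ge> (s - t0) * (- (1 + 2 * L) * N)"
        using dlow lt by (intro mult_left_mono) auto
      ultimately have "- \<phi> s \<le> (s - t0) * ((1 + 2 * L) * N)" using mv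
        by (simp add: algebra_simps)
      also have "\<dots> \<le> \<delta> * ((1 + 2 * L) * N)" using s L N0 unfolding T_def
        by (intro mult_right_mono) auto
      also have "\<dots> = (\<delta> * (1 + 2 * L)) * N" by (simp only: mult.assoc)
      also have "\<dots> = N / 2" unfolding \<delta>eq by simp
      finally show ?thesis unfolding \<phi>_def z_def w_def by simp
    qed
    have hv: "\<forall>v\<in>S. v \<le> N / 2" using half N0 unfolding S_def by auto
    have "Sup S \<le> N / 2" using S0 hv by (intro cSup_least) auto
    hence "N \<le> N / 2" by (simp add: N_def)
    hence "N \<le> 0" by simp
    thus ?thesis
    proof (intro ballI)
      fix t x assume "N \<le> 0" "t \<in> {t0..t0+\<delta>}" "x \<in> R"
      hence "z t x \<ge> 0" using zN[of t x] unfolding T_def by auto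
      thus "w t x \<ge> 0" unfolding z_def by (simp add: zero_le_mult_iff)
    qed
  qed
  have ind: "\<forall>t\<in>{0..real n * \<delta>}. \<forall>x\<in>R. w t x \<ge> 0" for n
  proof (induction n)
    case 0
    then show ?case using init unfolding w_def by auto
  next
    case (Suc n)
    have h0: "\<forall>x\<in>R. w (real n * \<delta>) x \<ge> 0" using Suc.IH \<delta>pos by auto
    have st: "\<forall>t\<in>{real n * \<delta>..real n * \<delta> + \<delta>}. \<forall>x\<in>R. w t x \<ge> 0"
      by (rule step[OF _ h0]) (use \<delta>pos in simp)
    show ?case
    proof (intro ballI)
      fix t x assume t: "t \<in> {0..real (Suc n) * \<delta>}" and x: "x \<in> R"
      show "w t x \<ge> 0"
      proof (cases "t \<le> real n * \<delta>")
        case True thus ?thesis using Suc.IH t x by auto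
      next
        case False thus ?thesis using st t x by (auto simp: algebra_simps)
      qed
    qed
  qed
  show ?thesis
  proof (intro allI impI ballI)
    fix t x :: real assume t: "t \<ge> 0" and x: "x \<in> R"
    obtain n where "t < real n * \<delta>" using ex_less_of_nat_mult[OF \<delta>pos] by blast
    hence "w t x \<ge> 0" using ind[of n] t x by auto
    thus "u t x \<le> u t (2*m - x)" unfolding w_def by simp
  qed
qed


lemma lip_f:
  fixes f f' :: "real \<Rightarrow> real"
  assumes f_deriv: "\<And>v. v \<in> {0..1} \<Longrightarrow> (f has_real_derivative f' v) (at v within {0..1})"
    and f'_cont: "continuous_on {0..1} f'"
  shows "\<exists>L\<ge>0. \<forall>a b. a \<in> {0..1} \<longrightarrow> b \<in> {0..1} \<longrightarrow> \<bar>f a - f b\<bar> \<le> L * \<bar>a - b\<bar>"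
proof -
  have "compact (f' ` {0..1})" by (rule compact_continuous_image[OF f'_cont]) simp
  then obtain B where B: "B > 0" "\<And>v. v \<in> {0..1} \<Longrightarrow> \<bar>f' v\<bar> \<le> B"
    using compact_imp_bounded bounded_pos by (metis imageI real_norm_def)
  have "\<bar>f a - f b\<bar> \<le> B * \<bar>a - b\<bar>" if a: "a \<in> {0..1}" and b: "b \<in> {0..1}" for a b
  proof -
    have "norm (f a - f b) \<le> B * norm (a - b)"
    proof (rule differentiable_bound[of "{0..1}" f "\<lambda>v. (*) (f' v)"])
      show "convex {0..1::real}" by simp
      fix x :: real assume x: "x \<in> {0..1}"
      show "(f has_derivative (*) (f' x)) (at x within {0..1})"
        using f_deriv[OF x] by (simp add: has_field_derivative_def)
      show "onorm ((*) (f' x)) \<le> B"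
        by (rule onorm_le) (use B(2)[OF x] in \<open>auto simp: abs_mult intro: mult_right_mono\<close>)
    qed (use a b in auto)
    thus ?thesis by simp
  qed
  thus ?thesis using B(1) by (intro exI[of _ B]) auto
qed

theorem theorem2p5:
  fixes k f f' u0 :: "real \<Rightarrow> real" and u :: "real \<Rightarrow> real \<Rightarrow> real" and x1 :: real
  assumes k_cont: "continuous_on UNIV k"
    and k_nonneg: "\<And>x. k x \<ge> 0"
    and k_int: "(k has_integral 1) UNIV"
    and K1: "\<exists>lam>0. (\<lambda>x. k x * exp (lam * \<bar>x\<bar>)) integrable_on UNIV"
    and K2: "\<exists>a b. a > 0 \<and> b < 0 \<and> k a > 0 \<and> k b > 0"
    and f_deriv: "\<And>v. v \<in> {0..1} \<Longrightarrow> (f has_real_derivative f' v) (at v within {0..1})"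
    and f'_cont: "continuous_on {0..1} f'"
    and f0: "f 0 = 0" and f1: "f 1 = 0"
    and f_pos: "\<And>v. 0 < v \<Longrightarrow> v < 1 \<Longrightarrow> f v > 0"
    and f'0: "f' 0 > 0"
    and f_kpp: "\<And>v. 0 < v \<Longrightarrow> v < 1 \<Longrightarrow> f v \<le> f' 0 * v"
    and u0_cont: "continuous_on UNIV u0"
    and u0_range: "\<And>x. 0 \<le> u0 x \<and> u0 x \<le> 1"
    and sol: "is_solution k f u0 u"
    and k_sym: "sym_decr k"
    and u0_sym: "sym_decr (\<lambda>x. u0 (x + x1))"
  shows "\<forall>t>0. sym_decr (\<lambda>x. u t (x + x1))"
proof -
  obtain L where L: "L \<ge> 0" "\<And>a b. a \<in> {0..1} \<Longrightarrow> b \<in> {0..1} \<Longrightarrow> \<bar>f a - f b\<bar> \<le> L * \<bar>a - b\<bar>"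
    using lip_f[OF f_deriv f'_cont] by blast
  have cont: "continuous_on ({0..} \<times> UNIV) (\<lambda>(t, x). u t x)"
    and rng: "\<forall>t\<ge>0. \<forall>x. 0 \<le> u t x \<and> u t x \<le> 1"
    and u0eq: "\<And>x. u 0 x = u0 x"
    and der: "\<forall>t>0. \<forall>x. (\<lambda>y. k (x - y) * u t y) integrable_on UNIV \<and>
        ((\<lambda>s. u s x) has_real_derivative
           (integral UNIV (\<lambda>y. k (x - y) * u t y) - u t x + f (u t x))) (at t)"
    using sol unfolding is_solution_def by auto
  have k_even: "\<And>v. k (- v) = k v" using k_sym unfolding sym_decr_def by auto
  have k_abs: "k v = k \<bar>v\<bar>" for v using k_even[of v] by (cases "v \<ge> 0") auto
  have k_mono: "k q \<le> k p" if "\<bar>p\<bar> \<le> \<bar>q\<bar>" for p q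
    using k_sym that k_abs[of p] k_abs[of q] unfolding sym_decr_def by auto
  define g where "g v = u0 (v + x1)" for v
  have g_even: "g (- v) = g v" for v using u0_sym unfolding sym_decr_def g_def by auto
  have g_abs: "g v = g \<bar>v\<bar>" for v using g_even[of v] by (cases "v \<ge> 0") auto
  have g_mono: "g q \<le> g p" if "\<bar>p\<bar> \<le> \<bar>q\<bar>" for p q
    using u0_sym that g_abs[of p] g_abs[of q] unfolding sym_decr_def g_def by auto
  have u0g: "u0 x = g (x - x1)" for x unfolding g_def by simp
  note C = core[OF cont rng der k_int k_even k_mono k_nonneg L(2) L(1)]
  have symA: "\<forall>t\<ge>0. \<forall>x\<in>{x. x1 \<le> x}. u t x \<le> u t (2*x1 - x)"
  proof (rule C)
    fix x assume "x \<in> {x. x1 \<le> x}"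
    have "u0 (2*x1 - x) = u0 x" unfolding u0g using g_even[of "x - x1"] by (simp add: algebra_simps)
    thus "u 0 x \<le> u 0 (2*x1 - x)" by (simp add: u0eq)
  qed auto
  have symB: "\<forall>t\<ge>0. \<forall>x\<in>{x. x \<le> x1}. u t x \<le> u t (2*x1 - x)"
  proof (rule C)
    fix x assume "x \<in> {x. x \<le> x1}"
    have "u0 (2*x1 - x) = u0 x" unfolding u0g using g_even[of "x - x1"] by (simp add: algebra_simps)
    thus "u 0 x \<le> u 0 (2*x1 - x)" by (simp add: u0eq)
  qed auto
  have symAll: "u t x \<le> u t (2*x1 - x)" if "t \<ge> 0" for t x
    using symA symB that by (cases "x1 \<le> x") auto
  show ?thesis
  proof (intro allI impI)
    fix t :: real assume t: "t > 0"
    have s: "u t (- x + x1) = u t (x + x1)" for x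
      using symAll[of t "x + x1"] symAll[of t "- x + x1"] t by (simp add: algebra_simps)
    have d: "u t (y + x1) \<le> u t (x + x1)" if xy: "0 \<le> x" "x \<le> y" for x y
    proof -
      define m where "m = x1 + (x + y) / 2"
      have M: "\<forall>t\<ge>0. \<forall>z\<in>{z. m \<le> z}. u t z \<le> u t (2*m - z)"
      proof (rule C)
        fix z assume z: "z \<in> {z. m \<le> z}"
        have e: "2*m - z - x1 = x + y + x1 - z" unfolding m_def by simp
        have z1: "m \<le> z" using z by simp
        have "z - x1 \<ge> 0" using z1 xy unfolding m_def by (simp add: field_simps)
        hence "\<bar>z - x1\<bar> = z - x1" by simp
        moreover have "x + y + x1 - z \<le> z - x1" "- (x + y + x1 - z) \<le> z - x1"
          using z1 xy unfolding m_def by (simp_all add: field_simps)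
        ultimately have "\<bar>2*m - z - x1\<bar> \<le> \<bar>z - x1\<bar>" unfolding e by (simp add: abs_le_iff)
        hence "g (z - x1) \<le> g (2*m - z - x1)" by (rule g_mono)
        thus "u 0 z \<le> u 0 (2*m - z)" by (simp add: u0eq u0g)
      qed auto
      have zin: "y + x1 \<in> {z. m \<le> z}" using xy by (simp add: m_def field_simps)
      have "u t (y + x1) \<le> u t (2*m - (y + x1))" using M t zin by auto
      moreover have "2*m - (y + x1) = x + x1" by (simp add: m_def field_simps)
      ultimately show ?thesis by simp
    qed
    show "sym_decr (\<lambda>x. u t (x + x1))" unfolding sym_decr_def using s d by auto
  qed
qed

end
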